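(* Let $n\ge3$, $N=2n+1$, $R=2n$, and for $r\in[R]$ let $F_r:2^{[N]}\to\mathbb{R}$ be given by $F_r(S)=1$ if $|S\cap\{r,r+1\}|=1$ and $F_r(S)=0$ otherwise (so $F_r$ is incident exactly to $\{r,r+1\}$, and $\|\mu\|_1=4n$). For this instance, let $\ell_*$ be the supremum of all $\ell\ge0$ such that for every $y\in\mathcal{B}$, $\|Ay-Ay^*\|_2^2\ge\ell\,\|y^*-y\|_2^2$, where $y^*=\arg\min_{z\in\Xi}\|z-y\|_2^2$. Then $\ell_*<7/N^2$.
   Context: For each $r$, $\mathcal{B}_r=\{u\in\mathbb{R}^N:\sum_{i\in S}u_i\le F_r(S)\ \forall S\subseteq[N],\ \sum_{i\in[N]}u_i=F_r([N])\}$ is the base polytope of $F_r$, $\mathcal{B}=\mathcal{B}_1\times\cdots\times\mathcal{B}_R\subseteq(\mathbb{R}^N)^R$, and $A:(\mathbb{R}^N)^R\to\mathbb{R}^N$, $Ay=\sum_ry_r$; $\|y\|_2^2=\sum_r\|y_r\|_2^2$. $\Xi$ is the set of minimizers of $\|Ay\|_2^2$ over $\mathcal{B}$. $\mu_i$ is the number of $r$ such that $F_r$ depends on element $i$. *)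

theory Defs
  imports "HOL-Analysis.Analysis"
begin

text \<open>Vectors in R^N are functions
  nat => real vanishing outside {1..N}; elements of (R^N)^R are functions
  nat => nat => real (first argument r, second i) vanishing outside {1..R} x {1..N}.\<close>

definition Fpath :: "nat \<Rightarrow> nat set \<Rightarrow> real" where
  "Fpath r S = (if card (S \<inter> {r, r+1}) = 1 then 1 else 0)"

definition base_polytope :: "nat \<Rightarrow> (nat set \<Rightarrow> real) \<Rightarrow> (nat \<Rightarrow> real) set" where
  "base_polytope N F = {u. (\<forall>i. i \<notin> {1..N} \<longrightarrow> u i = 0)
      \<and> (\<forall>S. S \<subseteq> {1..N} \<longrightarrow> (\<Sum>i\<in>S. u i) \<le> F S)
      \<and> (\<Sum>i\<in>{1..N}. u i) = F {1..N}}"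

definition prodB :: "nat \<Rightarrow> nat \<Rightarrow> (nat \<Rightarrow> nat set \<Rightarrow> real) \<Rightarrow> (nat \<Rightarrow> nat \<Rightarrow> real) set" where
  "prodB N R F = {y. (\<forall>r. r \<notin> {1..R} \<longrightarrow> y r = (\<lambda>_. 0))
      \<and> (\<forall>r\<in>{1..R}. y r \<in> base_polytope N (F r))}"

definition Aop :: "nat \<Rightarrow> (nat \<Rightarrow> nat \<Rightarrow> real) \<Rightarrow> nat \<Rightarrow> real" where
  "Aop R y = (\<lambda>i. \<Sum>r\<in>{1..R}. y r i)"

definition sqnormN :: "nat \<Rightarrow> (nat \<Rightarrow> real) \<Rightarrow> real" where
  "sqnormN N v = (\<Sum>i\<in>{1..N}. (v i)\<^sup>2)"

definition sqnormNR :: "nat \<Rightarrow> nat \<Rightarrow> (nat \<Rightarrow> nat \<Rightarrow> real) \<Rightarrow> real" where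
  "sqnormNR N R y = (\<Sum>r\<in>{1..R}. \<Sum>i\<in>{1..N}. (y r i)\<^sup>2)"

definition Xi :: "nat \<Rightarrow> nat \<Rightarrow> (nat \<Rightarrow> nat set \<Rightarrow> real) \<Rightarrow> (nat \<Rightarrow> nat \<Rightarrow> real) set" where
  "Xi N R F = {y \<in> prodB N R F. \<forall>z \<in> prodB N R F.
      sqnormN N (Aop R y) \<le> sqnormN N (Aop R z)}"

definition proj_Xi :: "nat \<Rightarrow> nat \<Rightarrow> (nat \<Rightarrow> nat set \<Rightarrow> real) \<Rightarrow> (nat \<Rightarrow> nat \<Rightarrow> real) \<Rightarrow> (nat \<Rightarrow> nat \<Rightarrow> real)" where
  "proj_Xi N R F y = (THE z. z \<in> Xi N R F \<and>
      (\<forall>w \<in> Xi N R F. sqnormNR N R (\<lambda>r i. z r i - y r i) \<le> sqnormNR N R (\<lambda>r i. w r i - y r i)))"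

definition ell_star :: "nat \<Rightarrow> nat \<Rightarrow> (nat \<Rightarrow> nat set \<Rightarrow> real) \<Rightarrow> real" where
  "ell_star N R F = Sup {l::real. l \<ge> 0 \<and> (\<forall>y \<in> prodB N R F.
      sqnormN N (\<lambda>i. Aop R y i - Aop R (proj_Xi N R F y) i)
        \<ge> l * sqnormNR N R (\<lambda>r i. proj_Xi N R F y r i - y r i))}"

end

theory Submission
  imports Defs
begin

lemma base_char:
  assumes u: "u \<in> base_polytope N (Fpath r)" and r: "1 \<le> r" "r+1 \<le> N"
  shows "u i = (if i = r then u r else 0) + (if i = r+1 then - u r else 0)"
proof -
  have out: "\<And>j. j \<notin> {1..N} \<Longrightarrow> u j = 0"
    and le: "\<And>S. S \<subseteq> {1..N} \<Longrightarrow> (\<Sum>j\<in>S. u j) \<le> Fpath r S"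
    and tot: "(\<Sum>j\<in>{1..N}. u j) = Fpath r {1..N}"
    using u unfolding base_polytope_def by auto
  have FN: "Fpath r {1..N} = 0"
  proof -
    have "{1..N} \<inter> {r, r+1} = {r, r+1}" using r by auto
    then show ?thesis by (simp add: Fpath_def)
  qed
  have z: "u j = 0" if "j \<noteq> r" "j \<noteq> r+1" for j
  proof (cases "j \<in> {1..N}")
    case False then show ?thesis using out by blast
  next
    case True
    have "{j} \<inter> {r, r+1} = {}" using that by auto
    then have "Fpath r {j} = 0" by (simp add: Fpath_def)
    with le[of "{j}"] True have a: "u j \<le> 0" by simp
    have "({1..N} - {j}) \<inter> {r, r+1} = {r, r+1}" using r that by auto
    then have "Fpath r ({1..N} - {j}) = 0" by (simp add: Fpath_def)
    with le[of "{1..N} - {j}"] have "(\<Sum>k\<in>{1..N} - {j}. u k) \<le> 0" by auto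
    moreover have "(\<Sum>k\<in>{1..N} - {j}. u k) = (\<Sum>k\<in>{1..N}. u k) - u j"
      using True by (simp add: sum_diff1)
    ultimately have "- u j \<le> 0" using tot FN by simp
    with a show ?thesis by simp
  qed
  have "(\<Sum>j\<in>{1..N}. u j) = (\<Sum>j\<in>{r, r+1}. u j)"
    by (rule sum.mono_neutral_right) (use r z in auto)
  then have "u r + u (r+1) = 0" using tot FN by simp
  then show ?thesis using z by auto
qed

lemma tent_base:
  assumes a: "\<bar>a\<bar> \<le> 1" and r: "1 \<le> r" "r+1 \<le> N"
  shows "(\<lambda>i. (if i = r then a else 0) + (if i = r+1 then -a else (0::real))) \<in> base_polytope N (Fpath r)"
proof -
  have s: "(\<Sum>i\<in>S. (if i = r then a else 0) + (if i = r+1 then -a else (0::real)))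
     = (if r \<in> S then a else 0) + (if r+1 \<in> S then -a else 0)" if "finite S" for S
    using that by (simp add: sum.distrib)
  show ?thesis unfolding base_polytope_def
  proof (intro CollectI conjI allI impI)
    fix i assume "i \<notin> {1..N}" then show "(if i = r then a else 0) + (if i = r+1 then -a else 0) = 0"
      using r by auto
  next
    fix S assume S: "S \<subseteq> {1..N}"
    then have fin: "finite S" by (rule finite_subset) simp
    have "(if r \<in> S then a else 0) + (if r+1 \<in> S then -a else 0) \<le> Fpath r S"
    proof (cases "r \<in> S"; cases "r+1 \<in> S")
      assume "r \<in> S" "r+1 \<in> S"
      then have "S \<inter> {r, r+1} = {r, r+1}" by auto
      then show ?thesis using \<open>r \<in> S\<close> \<open>r+1 \<in> S\<close> by (simp add: Fpath_def)
    next
      assume "r \<in> S" "r+1 \<notin> S"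
      then have "S \<inter> {r, r+1} = {r}" by auto
      then show ?thesis using \<open>r \<in> S\<close> \<open>r+1 \<notin> S\<close> a by (simp add: Fpath_def)
    next
      assume "r \<notin> S" "r+1 \<in> S"
      then have "S \<inter> {r, r+1} = {r+1}" by auto
      then show ?thesis using \<open>r \<notin> S\<close> \<open>r+1 \<in> S\<close> a by (simp add: Fpath_def)
    next
      assume "r \<notin> S" "r+1 \<notin> S"
      then have "S \<inter> {r, r+1} = {}" by auto
      then show ?thesis using \<open>r \<notin> S\<close> \<open>r+1 \<notin> S\<close> a by (simp add: Fpath_def)
    qed
    then show "(\<Sum>i\<in>S. (if i = r then a else 0) + (if i = r+1 then -a else 0)) \<le> Fpath r S"
      using s[OF fin] by simp
  next
    have "{1..N} \<inter> {r, r+1} = {r, r+1}" using r by auto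
    then show "(\<Sum>i\<in>{1..N}. (if i = r then a else 0) + (if i = r+1 then -a else 0)) = Fpath r {1..N}"
      unfolding s[OF finite_atLeastAtMost] Fpath_def using r by simp
  qed
qed

lemma prodB_rep:
  assumes "y \<in> prodB (2*n+1) (2*n) Fpath"
  shows "y r i = (if 1 \<le> r \<and> r \<le> 2*n then (if i = r then y r r else 0) + (if i = r+1 then - y r r else 0) else 0)"
proof (cases "1 \<le> r \<and> r \<le> 2*n")
  case True
  then have "y r \<in> base_polytope (2*n+1) (Fpath r)" using assms unfolding prodB_def by auto
  from base_char[OF this] True show ?thesis by auto
next
  case False then have "y r = (\<lambda>_. 0)" using assms unfolding prodB_def by auto
  then show ?thesis using False by simp
qed

definition G :: "nat \<Rightarrow> (nat \<Rightarrow> nat \<Rightarrow> real) \<Rightarrow> nat \<Rightarrow> real" where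
  "G n y r = (if 1 \<le> r \<and> r \<le> 2*n then y r r else 0)"

lemma Aop_rep:
  assumes y: "y \<in> prodB (2*n+1) (2*n) Fpath" and i: "1 \<le> i"
  shows "Aop (2*n) y i = G n y i - G n y (i-1)"
proof -
  have "Aop (2*n) y i = (\<Sum>r\<in>{1..2*n}. (if r = i then y r r else 0) + (if r = i - 1 then - y r r else 0))"
    unfolding Aop_def
  proof (rule sum.cong)
    fix r assume "r \<in> {1..2*n}"
    then show "y r i = (if r = i then y r r else 0) + (if r = i - 1 then - y r r else 0)"
      using i by (subst prodB_rep[OF y]) auto
  qed simp
  also have "\<dots> = G n y i - G n y (i-1)"
    by (simp add: sum.distrib G_def)
  finally show ?thesis .
qed

lemma zero_prodB: "(\<lambda>r i. 0) \<in> prodB (2*n+1) (2*n) Fpath"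
  unfolding prodB_def
proof (intro CollectI conjI ballI allI impI)
  fix r assume r: "r \<in> {1..2*n}"
  have "(\<lambda>i. (if i = r then 0 else 0) + (if i = r+1 then -0 else (0::real))) \<in> base_polytope (2*n+1) (Fpath r)"
    by (rule tent_base) (use r in auto)
  moreover have "(\<lambda>i. (if i = r then 0 else 0) + (if i = r+1 then -0 else (0::real))) = (\<lambda>i. 0)"
    by (rule ext) simp
  ultimately show "(\<lambda>i. 0) \<in> base_polytope (2*n+1) (Fpath r)" by simp
qed simp

lemma sqnormN_nonneg: "sqnormN N v \<ge> 0"
  unfolding sqnormN_def by (simp add: sum_nonneg)

lemma Xi_zero:
  assumes "y \<in> Xi (2*n+1) (2*n) Fpath"
  shows "y = (\<lambda>r i. 0)"
proof -
  have y: "y \<in> prodB (2*n+1) (2*n) Fpath" using assms unfolding Xi_def by auto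
  have "sqnormN (2*n+1) (Aop (2*n) y) \<le> sqnormN (2*n+1) (Aop (2*n) (\<lambda>r i. 0))"
    using assms zero_prodB unfolding Xi_def by blast
  also have "\<dots> = 0" by (simp add: sqnormN_def Aop_def)
  finally have "sqnormN (2*n+1) (Aop (2*n) y) = 0" using sqnormN_nonneg[of "2*n+1" "Aop (2*n) y"] by linarith
  then have "\<forall>i\<in>{1..2*n+1}. (Aop (2*n) y i)\<^sup>2 = 0"
    using sum_nonneg_eq_0_iff[of "{1..2*n+1}" "\<lambda>i. (Aop (2*n) y i)\<^sup>2"] by (simp add: sqnormN_def)
  then have A0: "Aop (2*n) y i = 0" if "1 \<le> i" "i \<le> 2*n+1" for i using that by auto
  have Gz: "i \<le> 2*n+1 \<longrightarrow> G n y i = 0" for i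
  proof (induction i)
    case 0 then show ?case by (simp add: G_def)
  next
    case (Suc i)
    show ?case
    proof
      assume si: "Suc i \<le> 2*n+1"
      then have "G n y i = 0" using Suc.IH by simp
      moreover have "Aop (2*n) y (Suc i) = G n y (Suc i) - G n y i" using Aop_rep[OF y, of "Suc i"] by simp
      moreover have "Aop (2*n) y (Suc i) = 0" using A0[of "Suc i"] si by simp
      ultimately show "G n y (Suc i) = 0" by simp
    qed
  qed
  show ?thesis
  proof (intro ext)
    fix r i
    show "y r i = 0"
    proof (cases "1 \<le> r \<and> r \<le> 2*n")
      case True
      then have "y r r = 0" using Gz[of r] unfolding G_def by auto
      then show ?thesis using True by (subst prodB_rep[OF y]) simp
    next
      case False then show ?thesis by (subst prodB_rep[OF y]) auto
    qed
  qed
qed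

lemma zero_Xi: "(\<lambda>r i. 0) \<in> Xi (2*n+1) (2*n) Fpath"
proof -
  have "sqnormN (2*n+1) (Aop (2*n) (\<lambda>r i. 0)) = 0" by (simp add: sqnormN_def Aop_def)
  then show ?thesis unfolding Xi_def using zero_prodB sqnormN_nonneg by auto
qed

lemma proj_zero: "proj_Xi (2*n+1) (2*n) Fpath y = (\<lambda>r i. 0)"
  unfolding proj_Xi_def
proof (rule the_equality)
  have "\<forall>w\<in>Xi (2*n+1) (2*n) Fpath. sqnormNR (2*n+1) (2*n) (\<lambda>r i. 0 - y r i) \<le> sqnormNR (2*n+1) (2*n) (\<lambda>r i. w r i - y r i)"
  proof
    fix w assume "w \<in> Xi (2*n+1) (2*n) Fpath"
    then have "w = (\<lambda>r i. 0)" by (rule Xi_zero)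
    then show "sqnormNR (2*n+1) (2*n) (\<lambda>r i. 0 - y r i) \<le> sqnormNR (2*n+1) (2*n) (\<lambda>r i. w r i - y r i)" by simp
  qed
  then show "(\<lambda>r i. 0) \<in> Xi (2*n+1) (2*n) Fpath \<and>
    (\<forall>w\<in>Xi (2*n+1) (2*n) Fpath. sqnormNR (2*n+1) (2*n) (\<lambda>r i. 0 - y r i) \<le> sqnormNR (2*n+1) (2*n) (\<lambda>r i. w r i - y r i))"
    using zero_Xi by blast
next
  fix z assume "z \<in> Xi (2*n+1) (2*n) Fpath \<and>
    (\<forall>w\<in>Xi (2*n+1) (2*n) Fpath. sqnormNR (2*n+1) (2*n) (\<lambda>r i. z r i - y r i) \<le> sqnormNR (2*n+1) (2*n) (\<lambda>r i. w r i - y r i))"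
  then show "z = (\<lambda>r i. 0)" using Xi_zero by blast
qed


definition av :: "nat \<Rightarrow> nat \<Rightarrow> real" where
  "av n r = real_of_int (min (int r) (2*int n + 1 - int r)) / real n"

definition y0 :: "nat \<Rightarrow> nat \<Rightarrow> nat \<Rightarrow> real" where
  "y0 n r i = (if 1 \<le> r \<and> r \<le> 2*n then (if i = r then av n r else 0) + (if i = r+1 then - av n r else 0) else 0)"

lemma av_bound:
  assumes "n \<ge> 1" "1 \<le> r" "r \<le> 2*n"
  shows "\<bar>av n r\<bar> \<le> 1"
proof -
  have h: "0 \<le> min (int r) (2*int n + 1 - int r)" "min (int r) (2*int n + 1 - int r) \<le> int n"
    using assms by auto
  then have "\<bar>real_of_int (min (int r) (2*int n + 1 - int r))\<bar> \<le> real n"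
    by linarith
  then show ?thesis using assms unfolding av_def by (simp add: abs_divide divide_le_eq_1)
qed

lemma y0_prodB:
  assumes "n \<ge> 1"
  shows "y0 n \<in> prodB (2*n+1) (2*n) Fpath"
  unfolding prodB_def
proof (intro CollectI conjI ballI allI impI)
  fix r assume "r \<notin> {1..2*n}"
  then show "y0 n r = (\<lambda>_. 0)" by (auto simp: y0_def)
next
  fix r assume r: "r \<in> {1..2*n}"
  have "y0 n r = (\<lambda>i. (if i = r then av n r else 0) + (if i = r+1 then - av n r else 0))"
    using r by (auto simp: y0_def)
  moreover have "\<dots> \<in> base_polytope (2*n+1) (Fpath r)"
    by (rule tent_base) (use r av_bound[OF assms, of r] in auto)
  ultimately show "y0 n r \<in> base_polytope (2*n+1) (Fpath r)" by simp
qed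

lemma G_y0:
  assumes "r \<le> 2*n+1"
  shows "G n (y0 n) r = av n r"
proof (cases "1 \<le> r \<and> r \<le> 2*n")
  case True then show ?thesis by (simp add: G_def y0_def)
next
  case False
  then have "r = 0 \<or> r = 2*n+1" using assms by auto
  then show ?thesis using False by (auto simp: G_def av_def)
qed

lemma diff_int:
  assumes "1 \<le> i" "i \<le> 2*n+1"
  shows "real_of_int (min (int i) (2*int n+1-int i)) - real_of_int (min (int (i-1)) (2*int n+1-int (i-1)))
    = (if i \<le> n then 1 else if i = n+1 then 0 else -1)"
proof -
  have e: "int (i-1) = int i - 1" using assms by simp
  show ?thesis unfolding e using assms by (auto simp: min_def)
qed

lemma diff_sq:
  assumes "1 \<le> i" "i \<le> 2*n+1"
  shows "(av n i - av n (i-1))\<^sup>2 = (if i = n+1 then 0 else 1/(real n)\<^sup>2)"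
proof -
  have "av n i - av n (i-1) = (if i \<le> n then 1 else if i = n+1 then 0 else -1) / real n"
    unfolding av_def using diff_int[OF assms] by (simp add: diff_divide_distrib[symmetric])
  then show ?thesis by (auto simp: power_divide)
qed

lemma X_val:
  assumes "n \<ge> 1"
  shows "sqnormN (2*n+1) (Aop (2*n) (y0 n)) = 2 / real n"
proof -
  have "sqnormN (2*n+1) (Aop (2*n) (y0 n)) = (\<Sum>i\<in>{1..2*n+1}. 1/(real n)\<^sup>2 - (if i = n+1 then 1/(real n)\<^sup>2 else 0))"
    unfolding sqnormN_def
  proof (rule sum.cong)
    fix i assume i: "i \<in> {1..2*n+1}"
    have g1: "G n (y0 n) (i-1) = av n (i-1)" by (rule G_y0) (use i in auto)
    have g2: "G n (y0 n) i = av n i" by (rule G_y0) (use i in auto)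
    have "Aop (2*n) (y0 n) i = av n i - av n (i-1)"
      using Aop_rep[OF y0_prodB[OF assms], of i] g1 g2 i by simp
    then show "(Aop (2*n) (y0 n) i)\<^sup>2 = 1/(real n)\<^sup>2 - (if i = n+1 then 1/(real n)\<^sup>2 else 0)"
      using diff_sq[of i n] i by simp
  qed simp
  also have "\<dots> = (2*real n + 1) / (real n)\<^sup>2 - 1/(real n)\<^sup>2"
    by (simp add: sum_subtractf)
  also have "\<dots> = 2 / real n" using assms by (simp add: field_simps power2_eq_square)
  finally show ?thesis .
qed

lemma sumsq: "(\<Sum>k\<in>{1..n}. (real k)\<^sup>2) = real n * (real n + 1) * (2*real n + 1) / 6"
  by (induction n) (simp_all add: field_simps power2_eq_square)

lemma msum: "(\<Sum>r\<in>{1..2*n}. (real_of_int (min (int r) (2*int n+1-int r)))\<^sup>2) = 2 * (\<Sum>k\<in>{1..n}. (real k)\<^sup>2)"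
proof -
  have "(\<Sum>r\<in>{1..2*n}. (real_of_int (min (int r) (2*int n+1-int r)))\<^sup>2)
      = (\<Sum>r\<in>{1..n}. (real_of_int (min (int r) (2*int n+1-int r)))\<^sup>2)
      + (\<Sum>r\<in>{n+1..n+n}. (real_of_int (min (int r) (2*int n+1-int r)))\<^sup>2)"
  proof -
    have e: "{1..2*n} = {1..n+n}" by (simp add: mult_2)
    show ?thesis unfolding e by (rule sum.ub_add_nat) simp
  qed
  also have "(\<Sum>r\<in>{1..n}. (real_of_int (min (int r) (2*int n+1-int r)))\<^sup>2) = (\<Sum>k\<in>{1..n}. (real k)\<^sup>2)"
    by (rule sum.cong) (auto simp: min_def)
  also have "(\<Sum>r\<in>{n+1..n+n}. (real_of_int (min (int r) (2*int n+1-int r)))\<^sup>2) = (\<Sum>k\<in>{1..n}. (real k)\<^sup>2)"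
  proof (rule sum.reindex_bij_witness[of _ "\<lambda>k. 2*n+1-k" "\<lambda>r. 2*n+1-r"])
    fix a assume a: "a \<in> {n+1..n+n}"
    then have e: "int (2*n+1-a) = 2*int n + 1 - int a" by simp
    show "(real (2*n+1-a))\<^sup>2 = (real_of_int (min (int a) (2*int n+1-int a)))\<^sup>2"
    proof -
      have "real (2*n+1-a) = real_of_int (int (2*n+1-a))" by simp
      also have "\<dots> = real_of_int (min (int a) (2*int n+1-int a))" unfolding e using a by (auto simp: min_def)
      finally show ?thesis by simp
    qed
  qed (simp only: atLeastAtMost_iff, arith)+
  finally show ?thesis by simp
qed

lemma Y_val:
  assumes "n \<ge> 1"
  shows "sqnormNR (2*n+1) (2*n) (y0 n) = 2*(real n+1)*(2*real n+1)/(3*real n)"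
proof -
  have "sqnormNR (2*n+1) (2*n) (y0 n) = (\<Sum>r\<in>{1..2*n}. 2 * (av n r)\<^sup>2)"
    unfolding sqnormNR_def
  proof (rule sum.cong)
    fix r assume r: "r \<in> {1..2*n}"
    have "(\<Sum>i\<in>{1..2*n+1}. (y0 n r i)\<^sup>2) = (\<Sum>i\<in>{1..2*n+1}. (if i = r then (av n r)\<^sup>2 else 0) + (if i = r+1 then (av n r)\<^sup>2 else 0))"
      by (rule sum.cong) (use r in \<open>auto simp: y0_def\<close>)
    also have "\<dots> = 2 * (av n r)\<^sup>2" using r by (simp add: sum.distrib)
    finally show "(\<Sum>i\<in>{1..2*n+1}. (y0 n r i)\<^sup>2) = 2 * (av n r)\<^sup>2" .
  qed simp
  also have "\<dots> = 2 * (\<Sum>r\<in>{1..2*n}. (real_of_int (min (int r) (2*int n+1-int r)))\<^sup>2) / (real n)\<^sup>2"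
    by (simp add: av_def power_divide sum_distrib_left sum_divide_distrib)
  also have "\<dots> = 2*(real n+1)*(2*real n+1)/(3*real n)"
    unfolding msum sumsq using assms by (simp add: field_simps power2_eq_square)
  finally show ?thesis .
qed

lemma a1: fixes x l :: real assumes "x \<ge> 1" "l * (2*(x+1)*(2*x+1)/(3*x)) \<le> 2 / x"
  shows "l \<le> 3 / ((x+1)*(2*x+1))"
proof -
  have P: "(x+1)*(2*x+1) > 0" using assms by simp
  have "l * (2*(x+1)*(2*x+1)) = (l * (2*(x+1)*(2*x+1)/(3*x))) * (3*x)" using assms by (simp add: field_simps)
  also have "\<dots> \<le> (2/x) * (3*x)" by (rule mult_right_mono) (use assms in auto)
  also have "\<dots> = 6" using assms by simp
  finally have h: "l * (2*(x+1)*(2*x+1)) \<le> 6" .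
  have "l * ((x+1)*(2*x+1)) = l * (2*(x+1)*(2*x+1)) / 2" by (simp add: algebra_simps)
  with h have "l * ((x+1)*(2*x+1)) \<le> 3" by linarith
  then show ?thesis using P by (simp add: pos_le_divide_eq)
qed
lemma a2: fixes x :: real assumes "x \<ge> 1" shows "3 / ((x+1)*(2*x+1)) < 7 / (2*x+1)\<^sup>2"
proof -
  have P: "(x+1)*(2*x+1) > 0" "(2*x+1)\<^sup>2 > 0" using assms by auto
  have "3 * (2*x+1)\<^sup>2 < 7 * ((x+1)*(2*x+1))"
  proof -
    have "3 * (2*x+1)\<^sup>2 = (2*x+1) * (6*x+3)" by (simp add: power2_eq_square algebra_simps)
    also have "\<dots> < (2*x+1) * (7*x+7)" using assms by (intro mult_strict_left_mono) auto
    also have "\<dots> = 7 * ((x+1)*(2*x+1))" by (simp add: algebra_simps)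
    finally show ?thesis .
  qed
  then show ?thesis using P by (simp add: frac_less_eq divide_less_eq field_simps)
qed

theorem mainTheorem5:
  fixes n :: nat
  assumes "n \<ge> 3"
  shows "ell_star (2*n+1) (2*n) Fpath < 7 / (real (2*n+1))\<^sup>2"
proof -
  have n1: "n \<ge> 1" using assms by simp
  define c where "c = 3 / ((real n+1)*(2*real n+1))"
  let ?L = "{l::real. l \<ge> 0 \<and> (\<forall>y \<in> prodB (2*n+1) (2*n) Fpath.
      sqnormN (2*n+1) (\<lambda>i. Aop (2*n) y i - Aop (2*n) (proj_Xi (2*n+1) (2*n) Fpath y) i)
        \<ge> l * sqnormNR (2*n+1) (2*n) (\<lambda>r i. proj_Xi (2*n+1) (2*n) Fpath y r i - y r i))}"
  have bound: "l \<le> c" if "l \<in> ?L" for l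
  proof -
    from that y0_prodB[OF n1] have
      "sqnormN (2*n+1) (\<lambda>i. Aop (2*n) (y0 n) i - Aop (2*n) (proj_Xi (2*n+1) (2*n) Fpath (y0 n)) i)
        \<ge> l * sqnormNR (2*n+1) (2*n) (\<lambda>r i. proj_Xi (2*n+1) (2*n) Fpath (y0 n) r i - y0 n r i)" by blast
    moreover have "(\<lambda>i. Aop (2*n) (y0 n) i - Aop (2*n) (proj_Xi (2*n+1) (2*n) Fpath (y0 n)) i) = Aop (2*n) (y0 n)"
      unfolding proj_zero by (simp add: Aop_def)
    moreover have "sqnormNR (2*n+1) (2*n) (\<lambda>r i. proj_Xi (2*n+1) (2*n) Fpath (y0 n) r i - y0 n r i) = sqnormNR (2*n+1) (2*n) (y0 n)"
      unfolding proj_zero by (simp add: sqnormNR_def)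
    ultimately have "l * (2*(real n+1)*(2*real n+1)/(3*real n)) \<le> 2 / real n"
      using X_val[OF n1] Y_val[OF n1] by simp
    then show ?thesis unfolding c_def using a1[of "real n" l] n1 by simp
  qed
  have "0 \<in> ?L" by (auto simp: sqnormN_nonneg)
  then have "ell_star (2*n+1) (2*n) Fpath \<le> c"
    unfolding ell_star_def by (intro cSup_least) (use bound in auto)
  also have "c < 7 / (real (2*n+1))\<^sup>2"
  proof -
    have e: "real (2*n+1) = 2*real n+1" by simp
    show ?thesis unfolding c_def e using a2[of "real n"] n1 by simp
  qed
  finally show ?thesis .
qed

end
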